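(* Let $n$ be a positive integer and let $p$ be a prime number with $p>n^2/4+1$. Then there is no arithmetical structure $(r_1,\dots,r_n)$ on $K_n$ with $r_1=p$.
   Context: An arithmetical structure on the complete graph $K_n$ is an $n$-tuple $(r_1,r_2,\dots,r_n)$ of positive integers with $\gcd(r_1,\dots,r_n)=1$ such that $r_j$ divides $\sum_{i=1}^n r_i$ for every $j$. The entries are always listed so that $r_1\geq r_2\geq\dots\geq r_n$; thus $r_1$ is the largest value of the structure. *)

theory Defs
  imports Complex_Main "HOL-Computational_Algebra.Primes"
begin

definition arith_structure_Kn :: "nat \<Rightarrow> (nat \<Rightarrow> nat) \<Rightarrow> bool" where
  "arith_structure_Kn n r \<longleftrightarrow>
     (\<forall>i\<in>{1..n}. 0 < r i) \<and>
     (\<forall>i j. 1 \<le> i \<longrightarrow> i \<le> j \<longrightarrow> j \<le> n \<longrightarrow> r j \<le> r i) \<and>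
     Gcd (r ` {1..n}) = 1 \<and>
     (\<forall>j\<in>{1..n}. r j dvd (\<Sum>i=1..n. r i))"


end

theory Submission
  imports Defs
begin

lemma small_div: fixes d m :: nat assumes "d dvd m" "d \<noteq> m" "0 < m" shows "2*d \<le> m"
proof -
  obtain q where q: "m = d*q" using assms(1) by blast
  have "q \<noteq> 0" using q assms(3) by auto
  moreover have "q \<noteq> 1" using q assms(2) by auto
  ultimately have "q \<ge> 2" by arith
  then show ?thesis using q by (metis mult.commute mult_le_mono2)
qed

lemma key:
  fixes a t p :: nat and B :: "nat set" and d :: "nat \<Rightarrow> nat"
  assumes fin: "finite B" and ne: "B \<noteq> {}" and a1: "a \<ge> 1" and t1: "t \<ge> 1" and pr: "prime p"
    and dj: "\<forall>j\<in>B. 0 < d j \<and> d j < p \<and> d j dvd (a+t)" and sm: "sum d B = t*p"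
  shows "real p \<le> (real (a + card B))^2/4 + 1"
proof (cases "t \<ge> 2")
  case True
  define b where "b = card B"
  have "\<forall>j\<in>B. d j \<le> a+t" using dj a1 by (simp add: dvd_imp_le)
  hence "sum d B \<le> b * (a+t)" unfolding b_def
    using sum_bounded_above[of B d "a+t"] by simp
  hence "t*p \<le> b*a + b*t" using sm by (simp add: algebra_simps)
  hence "t*(p-b) \<le> a*b" by (simp add: diff_mult_distrib2 algebra_simps)
  hence "2*(p-b) \<le> a*b" using True by (meson le_trans mult_le_mono1)
  hence "2*p \<le> 2*b + a*b" by linarith
  hence h: "2*real p \<le> 2*real b + real a*real b" by (metis of_nat_le_iff of_nat_add of_nat_mult of_nat_numeral)
  have s1: "(real a + 2 - real b)^2 \<ge> 0" by simp
  have s2: "(real a + real b - 2)^2 \<ge> 0" by simp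
  have "8*real p \<le> (real a + real b + 2)^2" using h s1 by (simp add: power2_eq_square algebra_simps)
  also have "\<dots> \<le> 2*(real a + real b)^2 + 8" using s2 by (simp add: power2_eq_square algebra_simps)
  finally show ?thesis unfolding b_def by simp
next
  case False
  hence t: "t = 1" using t1 by simp
  define m where "m = a+1"
  have m2: "m \<ge> 2" using a1 m_def by simp
  define K where "K = {j\<in>B. d j = m}"
  define C where "C = B - K"
  have fK: "finite K" "finite C" using fin K_def C_def by auto
  have BKC: "B = K \<union> C" "K \<inter> C = {}" using K_def C_def by auto
  have cB: "card B = card K + card C" using BKC fK card_Un_disjoint by metis
  have sK: "sum d K = card K * m" using K_def by simp
  have sB: "p = card K * m + sum d C" using sm t BKC fK sK sum.union_disjoint by (metis mult_1)
  have Cs: "\<forall>j\<in>C. 2 * d j \<le> m" using dj C_def K_def small_div m_def t m2 by auto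
  have sC: "2 * sum d C \<le> card C * m"
  proof -
    have "sum (\<lambda>j. 2 * d j) C \<le> card C * m" using sum_bounded_above[of C "\<lambda>j. 2*d j" m] Cs by simp
    thus ?thesis by (simp add: sum_distrib_left)
  qed
  consider "card C = 0" | "card C = 1" | "card C \<ge> 2" by arith
  then show ?thesis
  proof cases
    case 1
    hence C0: "C = {}" using fK by simp
    hence "p = card K * m" using sB by simp
    hence "card K = 1 \<or> m = 1" using pr prime_product by metis
    hence "m = p" using m2 \<open>p = card K * m\<close> by auto
    obtain j where "j \<in> B" using ne by blast
    hence "j \<in> K" using C0 BKC by auto
    hence "d j = p" using K_def \<open>m = p\<close> by simp
    thus ?thesis using dj \<open>j\<in>B\<close> by auto
  next
    case 2
    then obtain j where Cj: "C = {j}" using card_1_singletonE by blast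
    hence jB: "j \<in> B" using BKC by auto
    have pe: "p = card K * m + d j" using sB Cj by simp
    have "d j dvd m" using dj jB m_def t by simp
    hence "d j dvd p" using pe by simp
    hence "d j = 1" using pr dj jB by (metis prime_nat_iff less_irrefl)
    hence pe2: "real p = real (card K) * (real a + 1) + 1" using pe m_def by (simp add: algebra_simps)
    have ck: "card B = card K + 1" using cB 2 by simp
    have "(real a - real (card K) + 1)^2 \<ge> 0" by simp
    hence "4 * (real (card K) * (real a + 1)) \<le> (real a + real (card K) + 1)^2"
      by (simp add: power2_eq_square algebra_simps)
    thus ?thesis using pe2 ck by (simp add: algebra_simps)
  next
    case 3
    define k where "k = real (card K)"
    define c where "c = real (card C)"
    have c2: "c \<ge> 2" using 3 c_def by simp
    have "2 * real p \<le> 2*k*real m + c * real m" using sB sC k_def c_def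
    proof -
      have "2*p \<le> 2*card K*m + card C * m" using sB sC by simp
      thus ?thesis unfolding k_def c_def by (metis of_nat_le_iff of_nat_add of_nat_mult of_nat_numeral)
    qed
    hence h1: "4 * real p \<le> 2 * real m * (2*k + c)" by (simp add: algebra_simps)
    have "(2*real m - (2*k+c))^2 \<ge> 0" by simp
    hence h2: "8 * real m * (2*k+c) \<le> (2*real m + (2*k+c))^2" by (simp add: power2_eq_square algebra_simps)
    have nn: "2*real m + (2*k+c) \<le> 2*(real a + k + c)" using c2 m_def by simp
    have "0 \<le> 2*real m + (2*k+c)" using c2 k_def by simp
    hence "(2*real m + (2*k+c))^2 \<le> (2*(real a + k + c))^2" using nn power_mono by blast
    hence "8 * real m * (2*k+c) \<le> 4*(real a + k + c)^2" using h2 by (simp add: power2_eq_square algebra_simps)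
    hence "4 * real p \<le> (real a + k + c)^2" using h1 by simp
    moreover have "real (a + card B) = real a + k + c" using cB k_def c_def by simp
    ultimately show ?thesis by (simp add: add.assoc)
  qed
qed

theorem theorem3p2:
  fixes n p :: nat
  assumes "0 < n" and "prime p" and "real p > (real n)^2 / 4 + 1"
  shows "\<not> (\<exists>r. arith_structure_Kn n r \<and> r 1 = p)"
proof
  assume "\<exists>r. arith_structure_Kn n r \<and> r 1 = p"
  then obtain r where ar: "arith_structure_Kn n r" and r1: "r 1 = p" by blast
  define I where "I = {1..n}"
  define A where "A = {i\<in>I. r i = p}"
  define B where "B = {i\<in>I. r i \<noteq> p}"
  have pos: "\<forall>i\<in>I. 0 < r i" using ar unfolding arith_structure_Kn_def I_def by blast
  have le: "\<forall>i\<in>I. r i \<le> p" using ar r1 unfolding arith_structure_Kn_def I_def by auto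
  have gcd: "Gcd (r ` I) = 1" using ar unfolding arith_structure_Kn_def I_def by blast
  have dv: "\<forall>j\<in>I. r j dvd sum r I" using ar unfolding arith_structure_Kn_def I_def by blast
  have oneI: "1 \<in> I" using assms(1) I_def by simp
  have fin: "finite A" "finite B" "finite I" using A_def B_def I_def by auto
  have IAB: "I = A \<union> B" "A \<inter> B = {}" using A_def B_def by auto
  have sI: "sum r I = sum r A + sum r B" using IAB fin sum.union_disjoint by metis
  have sA: "sum r A = card A * p" using A_def by simp
  have "p dvd sum r I" using dv oneI r1 by metis
  hence pB: "p dvd sum r B" using sI sA by (simp add: dvd_add_right_iff)
  have Bne: "B \<noteq> {}"
  proof
    assume "B = {}"
    hence "r ` I = {p}" using IAB A_def oneI by auto
    hence "p = 1" using gcd by simp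
    thus False using assms(2) by simp
  qed
  have p0: "p > 0" using assms(2) prime_gt_0_nat by blast
  have "sum r B > 0" using Bne fin(2) pos B_def by (intro sum_pos) auto
  then obtain t where t: "sum r B = p * t" using pB by blast
  have t1: "t \<ge> 1" using t \<open>sum r B > 0\<close> by (cases t) auto
  have S: "sum r I = p * (card A + t)" using sI sA t by (simp add: algebra_simps)
  have dB: "\<forall>j\<in>B. 0 < r j \<and> r j < p \<and> r j dvd (card A + t)"
  proof
    fix j assume j: "j \<in> B"
    hence jI: "j \<in> I" and "r j \<noteq> p" using B_def by auto
    hence lt: "r j < p" using le by fastforce
    have pj: "0 < r j" using pos jI by simp
    have "\<not> p dvd r j" using lt pj by (meson dvd_imp_le not_le)
    hence "coprime p (r j)" using assms(2) prime_imp_coprime by blast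
    hence "coprime (r j) p" by (simp add: coprime_commute)
    moreover have "r j dvd p * (card A + t)" using dv jI S by metis
    ultimately have "r j dvd (card A + t)" using coprime_dvd_mult_right_iff by blast
    thus "0 < r j \<and> r j < p \<and> r j dvd (card A + t)" using lt pj by simp
  qed
  have a1: "card A \<ge> 1" using oneI A_def r1 fin by (metis (mono_tags, lifting) One_nat_def Suc_leI card_gt_0_iff empty_iff mem_Collect_eq)
  have cn: "card A + card B = n" using IAB fin card_Un_disjoint I_def by (metis card_atLeastAtMost diff_Suc_1)
  have "real p \<le> (real (card A + card B))^2/4 + 1"
    using key[OF fin(2) Bne a1 t1 assms(2) dB] t by (simp add: mult.commute)
  thus False using cn assms(3) by simp
qed

end
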